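(* For $i=1,\cdots,r$ let $\Theta_i\in H^\infty_{M_{n\times m_i}}$ be matrix inner functions, and let $\Theta\in H^\infty_{M_{n\times l}}$ be a least common multiple of $\{\Theta_1,\cdots,\Theta_r\}$, i.e. a matrix inner function with $\bigcap_{i=1}^r\Theta_iH^2_{\mathbb C^{m_i}}=\Theta H^2_{\mathbb C^l}$. Then $n-\sum_{i=1}^r(n-m_i)\le l\le\min\{m_1,\cdots,m_r\}$.
   Context: A matrix function $\Theta\in H^\infty_{M_{n\times m}}$ is inner if $\Theta(\zeta)^*\Theta(\zeta)=I$ for a.e. $\zeta$ on the unit circle; $H^2_{\mathbb C^m}$ is the space of column vectors of $m$ functions in the Hardy space $H^2$. *)

theory Defs
  imports "HOL-Analysis.Analysis"
begin

text \<open>Scalar functions on the unit disc are normalised to be 0 outside the open disc,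
so that sets of functions can be compared by equality.\<close>

definition H2 :: "(complex \<Rightarrow> complex) set" where
  "H2 = {f. f holomorphic_on ball 0 1 \<and> (\<forall>z. z \<notin> ball 0 1 \<longrightarrow> f z = 0) \<and>
        (\<exists>B. \<forall>\<rho>\<in>{0<..<1}. integral {0..2*pi} (\<lambda>t. (cmod (f (complex_of_real \<rho> * cis t)))\<^sup>2) \<le> B)}"

definition Hinf :: "(complex \<Rightarrow> complex) set" where
  "Hinf = {f. f holomorphic_on ball 0 1 \<and> (\<forall>z. z \<notin> ball 0 1 \<longrightarrow> f z = 0) \<and>
        bounded (f ` ball 0 1)}"

definition has_radial_limit :: "(complex \<Rightarrow> complex) \<Rightarrow> real \<Rightarrow> bool" where
  "has_radial_limit f t \<longleftrightarrow> (\<exists>L. ((\<lambda>\<rho>. f (complex_of_real \<rho> * cis t)) \<longlongrightarrow> L) (at_left 1))"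

definition bval :: "(complex \<Rightarrow> complex) \<Rightarrow> real \<Rightarrow> complex" where
  "bval f t = Lim (at_left 1) (\<lambda>\<rho>. f (complex_of_real \<rho> * cis t))"

text \<open>An n x m matrix function: entries Theta i j for i < n, j < m; zero elsewhere.\<close>
type_synonym matfun = "nat \<Rightarrow> nat \<Rightarrow> complex \<Rightarrow> complex"
type_synonym vecfun = "nat \<Rightarrow> complex \<Rightarrow> complex"

definition Hinf_mat :: "nat \<Rightarrow> nat \<Rightarrow> matfun set" where
  "Hinf_mat n m = {\<Theta>. \<forall>i j. (i < n \<and> j < m \<longrightarrow> \<Theta> i j \<in> Hinf) \<and>
                          (\<not> (i < n \<and> j < m) \<longrightarrow> \<Theta> i j = (\<lambda>_. 0))}"

definition inner_mat :: "nat \<Rightarrow> nat \<Rightarrow> matfun \<Rightarrow> bool" where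
  "inner_mat n m \<Theta> \<longleftrightarrow> \<Theta> \<in> Hinf_mat n m \<and>
     (AE t in lborel. (\<forall>i<n. \<forall>j<m. has_radial_limit (\<Theta> i j) t) \<and>
        (\<forall>j<m. \<forall>k<m. (\<Sum>i<n. cnj (bval (\<Theta> i j) t) * bval (\<Theta> i k) t) = (if j = k then 1 else 0)))"

definition H2vec :: "nat \<Rightarrow> vecfun set" where
  "H2vec m = {F. \<forall>j. (j < m \<longrightarrow> F j \<in> H2) \<and> (\<not> j < m \<longrightarrow> F j = (\<lambda>_. 0))}"

definition mat_range :: "nat \<Rightarrow> matfun \<Rightarrow> vecfun set" where
  "mat_range m \<Theta> = {(\<lambda>i z. \<Sum>k<m. \<Theta> i k z * F k z) | F. F \<in> H2vec m}"

end

theory Submission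
  imports Defs Jordan_Normal_Form.Determinant "HOL-Complex_Analysis.Complex_Analysis"
begin

lemma L1:
  fixes c :: "'a \<Rightarrow> 'b \<Rightarrow> complex"
  assumes "finite A" "finite B" "card A < card B"
  shows "\<exists>x. (\<exists>b\<in>B. x b \<noteq> 0) \<and> (\<forall>a\<in>A. (\<Sum>b\<in>B. c a b * x b) = 0)"
  using assms
proof (induction A arbitrary: B c rule: finite_induct)
  case empty
  then obtain b where "b \<in> B" by fastforce
  then show ?case by (intro exI[of _ "\<lambda>_. 1"]) auto
next
  case (insert a A)
  show ?case
  proof (cases "\<forall>b\<in>B. c a b = 0")
    case True
    have "card A < card B" using insert by simp
    then obtain x where x: "\<exists>b\<in>B. x b \<noteq> 0" "\<forall>a\<in>A. (\<Sum>b\<in>B. c a b * x b) = 0"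
      using insert.IH[OF insert.prems(1)] by blast
    show ?thesis using x True by (intro exI[of _ x]) auto
  next
    case False
    then obtain b0 where b0: "b0 \<in> B" "c a b0 \<noteq> 0" by blast
    define B' where "B' = B - {b0}"
    define c' where "c' a' b = c a' b - c a' b0 * c a b / c a b0" for a' b
    have cB': "card B' = card B - 1" using b0 insert.prems unfolding B'_def by simp
    have "card A < card B'" using insert cB' by simp
    then obtain x where x: "\<exists>b\<in>B'. x b \<noteq> 0" "\<forall>a'\<in>A. (\<Sum>b\<in>B'. c' a' b * x b) = 0"
      using insert.IH[of B' c'] insert.prems unfolding B'_def by auto
    define v where "v = - (\<Sum>b\<in>B'. c a b * x b) / c a b0"
    define y where "y b = (if b = b0 then v else x b)" for b
    have sumsplit: "(\<Sum>b\<in>B. f b) = f b0 + (\<Sum>b\<in>B'. f b)" for f :: "'b \<Rightarrow> complex"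
      using b0 insert.prems unfolding B'_def by (simp add: sum.remove)
    have yB': "(\<Sum>b\<in>B'. g b * y b) = (\<Sum>b\<in>B'. g b * x b)" for g
      unfolding y_def B'_def by (intro sum.cong) auto
    have "\<exists>b\<in>B. y b \<noteq> 0" using x(1) unfolding y_def B'_def by auto
    moreover have "(\<Sum>b\<in>B. c a b * y b) = 0"
      unfolding sumsplit yB' using b0 by (simp add: y_def v_def)
    moreover have "(\<Sum>b\<in>B. c a' b * y b) = 0" if "a' \<in> A" for a'
    proof -
      have "(\<Sum>b\<in>B. c a' b * y b) = c a' b0 * v + (\<Sum>b\<in>B'. c a' b * x b)"
        unfolding sumsplit yB' by (simp add: y_def)
      also have "\<dots> = (\<Sum>b\<in>B'. c' a' b * x b)"
        unfolding c'_def v_def using b0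
        by (simp add: algebra_simps sum_subtractf sum_distrib_left sum_divide_distrib)
      finally show ?thesis using x(2) that by simp
    qed
    ultimately show ?thesis by auto
  qed
qed

definition minor :: "('r \<Rightarrow> nat \<Rightarrow> complex) \<Rightarrow> 'r list \<Rightarrow> nat list \<Rightarrow> complex mat" where
  "minor B I J = Matrix.mat (length I) (length J) (\<lambda>(a,b). B (I!a) (J!b))"

definition cw :: "('r \<Rightarrow> nat \<Rightarrow> complex) \<Rightarrow> 'r list \<Rightarrow> nat list \<Rightarrow> nat \<Rightarrow> nat \<Rightarrow> complex" where
  "cw B I J c j = (\<Sum>b<Suc (length I). if (J@[c])!b = j then
      (-1)^(length I + b) * Determinant.det (Matrix.mat (length I) (length I)
         (\<lambda>(i',j'). B (I!i') ((J@[c])! (if j' < b then j' else Suc j')))) else 0)"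

lemma cw_zero: "j \<notin> set J \<Longrightarrow> j \<noteq> c \<Longrightarrow> length J = length I \<Longrightarrow> cw B I J c j = 0"
  unfolding cw_def
  by (intro sum.neutral ballI) (auto simp: nth_append nth_mem split: if_splits)

lemma cw_c:
  assumes "c \<notin> set J" "length J = length I"
  shows "cw B I J c c = Determinant.det (minor B I J)"
proof -
  let ?q = "length I"
  have "cw B I J c c = (\<Sum>b\<in>{?q}. (-1)^(?q + b) * Determinant.det (Matrix.mat ?q ?q
         (\<lambda>(i',j'). B (I!i') ((J@[c])! (if j' < b then j' else Suc j')))))"
    unfolding cw_def
    apply (rule sum.mono_neutral_cong_right)
    using assms by (auto simp: nth_append nth_mem split: if_splits)
  also have "\<dots> = Determinant.det (Matrix.mat ?q ?q (\<lambda>(i',j'). B (I!i') ((J@[c])! j')))"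
  proof -
    have "Matrix.mat ?q ?q (\<lambda>(i',j'). B (I!i') ((J@[c])! (if j' < ?q then j' else Suc j'))) =
       Matrix.mat ?q ?q (\<lambda>(i',j'). B (I!i') ((J@[c])! j'))"
      by (intro eq_matI) auto
    then show ?thesis by (simp add: power_add[symmetric] mult_2[symmetric])
  qed
  also have "Matrix.mat ?q ?q (\<lambda>(i',j'). B (I!i') ((J@[c])! j')) = minor B I J"
    unfolding minor_def using assms by (intro eq_matI) (auto simp: nth_append)
  finally show ?thesis .
qed

lemma cw_row:
  assumes fin: "finite Cols" and sub: "set J \<subseteq> Cols" "c \<in> Cols" and dist: "distinct (J@[c])"
    and len: "length J = length I"
  shows "(\<Sum>j\<in>Cols. B \<rho> j * cw B I J c j) = Determinant.det (minor B (I@[\<rho>]) (J@[c]))"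
proof -
  let ?q = "length I"
  let ?J = "J@[c]"
  let ?A = "minor B (I@[\<rho>]) ?J"
  have A: "?A \<in> carrier_mat (Suc ?q) (Suc ?q)" unfolding minor_def using len by auto
  have cof: "cofactor ?A ?q b = (-1)^(?q + b) * Determinant.det (Matrix.mat ?q ?q
         (\<lambda>(i',j'). B (I!i') (?J ! (if j' < b then j' else Suc j'))))" if "b < Suc ?q" for b
  proof -
    have "mat_delete ?A ?q b = Matrix.mat ?q ?q
         (\<lambda>(i',j'). B (I!i') (?J ! (if j' < b then j' else Suc j')))"
      unfolding mat_delete_def minor_def using len that
      by (intro eq_matI) (auto simp: nth_append)
    then show ?thesis unfolding cofactor_def by simp
  qed
  have "Determinant.det ?A = (\<Sum>b<Suc ?q. ?A $$ (?q, b) * cofactor ?A ?q b)"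
    by (rule laplace_expansion_row[OF A]) simp
  also have "\<dots> = (\<Sum>b<Suc ?q. B \<rho> (?J!b) * cofactor ?A ?q b)"
    unfolding minor_def using len by (intro sum.cong) (auto simp: nth_append)
  also have "\<dots> = (\<Sum>b<Suc ?q. \<Sum>j\<in>Cols. if ?J!b = j then B \<rho> j * cofactor ?A ?q b else 0)"
  proof (intro sum.cong refl)
    fix b assume "b \<in> {..<Suc ?q}"
    then have "?J!b \<in> Cols" using sub len by (auto simp: nth_append nth_mem)
    then show "B \<rho> (?J!b) * cofactor ?A ?q b = (\<Sum>j\<in>Cols. if ?J!b = j then B \<rho> j * cofactor ?A ?q b else 0)"
      using fin by (simp add: sum.delta)
  qed
  also have "\<dots> = (\<Sum>j\<in>Cols. \<Sum>b<Suc ?q. if ?J!b = j then B \<rho> j * cofactor ?A ?q b else 0)"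
    by (rule sum.swap)
  also have "\<dots> = (\<Sum>j\<in>Cols. B \<rho> j * cw B I J c j)"
    unfolding cw_def sum_distrib_left
    by (intro sum.cong refl) (auto simp: cof)
  finally show ?thesis by simp
qed

definition BH :: "(complex \<Rightarrow> complex) \<Rightarrow> bool" where
  "BH f \<longleftrightarrow> f holomorphic_on ball 0 1 \<and> (\<exists>M. \<forall>z\<in>ball 0 1. norm (f z) \<le> M)"

lemma BH_const: "BH (\<lambda>z. c)"
  unfolding BH_def by auto

lemma BH_add: "BH f \<Longrightarrow> BH g \<Longrightarrow> BH (\<lambda>z. f z + g z)"
  unfolding BH_def
proof (elim conjE exE, intro conjI)
  fix M N assume "\<forall>z\<in>ball 0 1. norm (f z) \<le> M" "\<forall>z\<in>ball 0 1. norm (g z) \<le> N"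
  then show "\<exists>M. \<forall>z\<in>ball 0 1. norm (f z + g z) \<le> M"
    by (intro exI[of _ "M+N"]) (auto intro: norm_triangle_le add_mono)
qed (auto intro: holomorphic_intros)

lemma BH_uminus: "BH f \<Longrightarrow> BH (\<lambda>z. - f z)"
  unfolding BH_def by (auto intro: holomorphic_intros)

lemma BH_diff: "BH f \<Longrightarrow> BH g \<Longrightarrow> BH (\<lambda>z. f z - g z)"
  using BH_add[of f "\<lambda>z. - g z"] BH_uminus[of g] by simp

lemma BH_mult: "BH f \<Longrightarrow> BH g \<Longrightarrow> BH (\<lambda>z. f z * g z)"
  unfolding BH_def
proof (elim conjE exE, intro conjI)
  fix M N assume M: "\<forall>z\<in>ball 0 1. norm (f z) \<le> M" and N: "\<forall>z\<in>ball 0 1. norm (g z) \<le> N"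
  show "\<exists>M. \<forall>z\<in>ball 0 1. norm (f z * g z) \<le> M"
  proof (intro exI[of _ "M*N"] ballI)
    fix z assume z: "z \<in> ball (0::complex) 1"
    have "norm (f z * g z) = norm (f z) * norm (g z)" by (simp add: norm_mult)
    also have "\<dots> \<le> M * N" using M N z by (intro mult_mono) (auto intro: order_trans[OF norm_ge_zero])
    finally show "norm (f z * g z) \<le> M * N" .
  qed
qed (auto intro: holomorphic_intros)

lemma BH_sum: "(\<And>i. i \<in> A \<Longrightarrow> BH (f i)) \<Longrightarrow> BH (\<lambda>z. \<Sum>i\<in>A. f i z)"
  by (induction A rule: infinite_finite_induct) (auto intro: BH_add BH_mult BH_const)

lemma BH_prod: "(\<And>i. i \<in> A \<Longrightarrow> BH (f i)) \<Longrightarrow> BH (\<lambda>z. \<Prod>i\<in>A. f i z)"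
  by (induction A rule: infinite_finite_induct) (auto intro: BH_add BH_mult BH_const)

lemma BH_if: "BH f \<Longrightarrow> BH g \<Longrightarrow> BH (\<lambda>z. if P then f z else g z)"
  by (cases P) auto

lemma BH_det:
  assumes "\<And>z. F z \<in> carrier_mat p p" "\<And>i j. i < p \<Longrightarrow> j < p \<Longrightarrow> BH (\<lambda>z. F z $$ (i,j))"
  shows "BH (\<lambda>z. Determinant.det (F z))"
proof -
  have "BH (\<lambda>z. \<Sum>\<pi>\<in>{\<pi>. \<pi> permutes {0..<p}}. signof \<pi> * (\<Prod>i=0..<p. F z $$ (i, \<pi> i)))"
  proof (intro BH_sum BH_mult BH_prod BH_const)
    fix \<pi> i assume "\<pi> \<in> {\<pi>. \<pi> permutes {0..<p}}" "i \<in> {0..<p}"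
    then have "\<pi> i < p" by (auto dest: permutes_in_image)
    then show "BH (\<lambda>z. F z $$ (i, \<pi> i))" using assms(2) \<open>i \<in> {0..<p}\<close> by auto
  qed
  then show ?thesis using det_def'[OF assms(1)] by simp
qed

lemma BH_det_mat:
  assumes "\<And>i j. i < p \<Longrightarrow> j < p \<Longrightarrow> BH (f i j)"
  shows "BH (\<lambda>z. Determinant.det (Matrix.mat p p (\<lambda>(i,j). f i j z)))"
  by (rule BH_det) (use assms in auto)

lemma BH_cofactor:
  assumes "\<And>z. F z \<in> carrier_mat p p" "\<And>i j. i < p \<Longrightarrow> j < p \<Longrightarrow> BH (\<lambda>z. F z $$ (i,j))"
  shows "BH (\<lambda>z. cofactor (F z) a b)"
proof -
  have "BH (\<lambda>z. Determinant.det (mat_delete (F z) a b))"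
  proof (rule BH_det)
    show "mat_delete (F z) a b \<in> carrier_mat (p-1) (p-1)" for z
      using mat_delete_carrier[OF assms(1)] .
    fix i j assume "i < p - 1" "j < p - 1"
    then show "BH (\<lambda>z. mat_delete (F z) a b $$ (i, j))"
    proof -
      have "BH (\<lambda>z. F z $$ (if i < a then i else Suc i, if j < b then j else Suc j))"
        using assms(2) \<open>i < p - 1\<close> \<open>j < p - 1\<close> by simp
      moreover have "mat_delete (F z) a b $$ (i, j) = F z $$ (if i < a then i else Suc i, if j < b then j else Suc j)" for z
        unfolding mat_delete_def using assms(1)[of z] \<open>i < p - 1\<close> \<open>j < p - 1\<close> by simp
      ultimately show ?thesis by simp
    qed
  qed
  from BH_mult[OF BH_const this] show ?thesis unfolding cofactor_def .
qed

lemma BH_minor: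
  assumes "\<And>i j. BH (\<lambda>z. B z i j)"
  shows "BH (\<lambda>z. Determinant.det (minor (B z) I J))"
proof (cases "length I = length J")
  case True
  have "BH (\<lambda>z. Determinant.det (Matrix.mat (length I) (length I) (\<lambda>(a,b). B z (I!a) (J!b))))"
    by (rule BH_det_mat) (rule assms)
  then show ?thesis unfolding minor_def True by simp
next
  case False
  then have "Determinant.det (minor (B z) I J) = 0" for z
    unfolding minor_def Determinant.det_def by simp
  then show ?thesis by (simp add: BH_const)
qed

lemma BH_cw:
  assumes "\<And>i j. BH (\<lambda>z. B z i j)"
  shows "BH (\<lambda>z. cw (B z) I J c j)"
  unfolding cw_def by (intro BH_sum BH_if BH_mult BH_det_mat BH_const assms)

lemma Hinf_BH: "f \<in> Hinf \<Longrightarrow> BH f"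
  unfolding Hinf_def BH_def by (auto simp: bounded_iff)

lemma BH_H2:
  assumes "BH f"
  shows "(\<lambda>z. if z \<in> ball 0 1 then f z else 0) \<in> H2"
proof -
  obtain M where M: "\<forall>z\<in>ball 0 1. norm (f z) \<le> M" and hol: "f holomorphic_on ball 0 1"
    using assms unfolding BH_def by auto
  define g where "g = (\<lambda>z. if z \<in> ball 0 1 then f z else 0)"
  have hg: "g holomorphic_on ball 0 1"
    using hol by (rule holomorphic_transform) (simp add: g_def)
  have contg: "continuous_on (ball 0 1) g"
    using hg holomorphic_on_imp_continuous_on by blast
  have "integral {0..2*pi} (\<lambda>t. (cmod (g (complex_of_real \<rho> * cis t)))\<^sup>2) \<le> M\<^sup>2 * (2*pi - 0)"
    if "\<rho> \<in> {0<..<1}" for \<rho>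
  proof -
    have inb: "complex_of_real \<rho> * cis t \<in> ball 0 1" for t
      using that by (simp add: norm_mult)
    have c0: "continuous_on UNIV (\<lambda>t. complex_of_real \<rho> * cis t)"
      by (intro continuous_intros)
    have c1: "continuous_on UNIV (\<lambda>t. g (complex_of_real \<rho> * cis t))"
      by (rule continuous_on_compose2[OF contg c0]) (use inb in blast)
    have c2: "continuous_on UNIV (\<lambda>t. (cmod (g (complex_of_real \<rho> * cis t)))\<^sup>2)"
      by (rule continuous_on_power[OF continuous_on_norm[OF c1]])
    have cont: "continuous_on {0..2*pi} (\<lambda>t. (cmod (g (complex_of_real \<rho> * cis t)))\<^sup>2)"
      by (rule continuous_on_subset[OF c2]) simp
    have bd: "norm ((cmod (g (complex_of_real \<rho> * cis t)))\<^sup>2) \<le> M\<^sup>2" for t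
    proof -
      have "cmod (g (complex_of_real \<rho> * cis t)) \<le> M" using M inb[of t] by (simp add: g_def)
      then show ?thesis by (simp add: power_mono)
    qed
    have "norm (integral {0..2*pi} (\<lambda>t. (cmod (g (complex_of_real \<rho> * cis t)))\<^sup>2)) \<le> M\<^sup>2 * (2*pi - 0)"
      by (rule integral_bound[OF _ cont bd]) simp
    then show ?thesis by simp
  qed
  moreover have "\<forall>z. z \<notin> ball 0 1 \<longrightarrow> g z = 0" by (simp add: g_def)
  ultimately have "g \<in> H2" unfolding H2_def using hg by blast
  then show ?thesis by (simp add: g_def)
qed

lemma AE_lborel_ex:
  assumes "AE t in (lborel :: real measure). P t"
  shows "\<exists>t. P t"
proof (rule ccontr)
  assume "\<not> (\<exists>t. P t)"
  from assms obtain N where N: "{x \<in> space lborel. \<not> P x} \<subseteq> N" "emeasure lborel N = 0" "N \<in> sets lborel"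
    by (auto elim: AE_E)
  then have "UNIV \<subseteq> N" using \<open>\<not> (\<exists>t. P t)\<close> by auto
  then have "emeasure lborel (UNIV :: real set) \<le> emeasure lborel N"
    using N(3) by (intro emeasure_mono) auto
  then show False using N(2) by simp
qed

lemma double_sum_le:
  fixes a :: "'a \<Rightarrow> real"
  assumes "finite A"
  shows "(\<Sum>j\<in>A. \<Sum>k\<in>A. a j * a k) \<le> real (card A) * (\<Sum>j\<in>A. (a j)\<^sup>2)"
proof -
  have "(\<Sum>j\<in>A. \<Sum>k\<in>A. a j * a k) \<le> (\<Sum>j\<in>A. \<Sum>k\<in>A. ((a j)\<^sup>2 + (a k)\<^sup>2) / 2)"
  proof (intro sum_mono)
    fix j k
    have "0 \<le> (a j - a k)\<^sup>2" by simp
    then show "a j * a k \<le> ((a j)\<^sup>2 + (a k)\<^sup>2) / 2" by (simp add: power2_eq_square algebra_simps)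
  qed
  also have "\<dots> = (\<Sum>j\<in>A. \<Sum>k\<in>A. (a j)\<^sup>2 / 2) + (\<Sum>j\<in>A. \<Sum>k\<in>A. (a k)\<^sup>2 / 2)"
    by (simp add: add_divide_distrib sum.distrib)
  also have "(\<Sum>j\<in>A. \<Sum>k\<in>A. (a k)\<^sup>2 / 2) = (\<Sum>j\<in>A. \<Sum>k\<in>A. (a j)\<^sup>2 / 2)"
    by (rule sum.swap)
  also have "(\<Sum>j\<in>A. \<Sum>k\<in>A. (a j)\<^sup>2 / 2) + (\<Sum>j\<in>A. \<Sum>k\<in>A. (a j)\<^sup>2 / 2)
      = real (card A) * (\<Sum>j\<in>A. (a j)\<^sup>2)"
    by (simp add: sum_distrib_left)
  finally show ?thesis .
qed

lemma quad_identity: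
  fixes X :: "nat \<Rightarrow> nat \<Rightarrow> complex" and x :: "nat \<Rightarrow> complex"
  shows "(\<Sum>j<m. \<Sum>k<m. cnj (x j) * x k * (\<Sum>a<n. cnj (X a j) * X a k))
       = (\<Sum>a<n. (\<Sum>j<m. cnj (x j) * cnj (X a j)) * (\<Sum>k<m. X a k * x k))"
proof -
  have "(\<Sum>j<m. \<Sum>k<m. cnj (x j) * x k * (\<Sum>a<n. cnj (X a j) * X a k))
      = (\<Sum>j<m. \<Sum>k<m. \<Sum>a<n. (cnj (x j) * cnj (X a j)) * (X a k * x k))"
    by (simp add: sum_distrib_left mult_ac)
  also have "\<dots> = (\<Sum>j<m. \<Sum>a<n. \<Sum>k<m. (cnj (x j) * cnj (X a j)) * (X a k * x k))"
    by (intro sum.cong refl sum.swap)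
  also have "\<dots> = (\<Sum>a<n. \<Sum>j<m. \<Sum>k<m. (cnj (x j) * cnj (X a j)) * (X a k * x k))"
    by (rule sum.swap)
  also have "\<dots> = (\<Sum>a<n. (\<Sum>j<m. cnj (x j) * cnj (X a j)) * (\<Sum>k<m. X a k * x k))"
    by (simp add: sum_product)
  finally show ?thesis .
qed

lemma NB:
  assumes "inner_mat n m X"
  shows "\<exists>z\<in>ball 0 1. \<forall>x. (\<forall>a<n. (\<Sum>k<m. X a k z * x k) = 0) \<longrightarrow> (\<forall>k<m. x k = 0)"
proof -
  obtain t where t: "\<forall>i<n. \<forall>j<m. has_radial_limit (X i j) t"
    "\<forall>j<m. \<forall>k<m. (\<Sum>i<n. cnj (bval (X i j) t) * bval (X i k) t) = (if j = k then 1 else 0)"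
    using AE_lborel_ex[OF assms[unfolded inner_mat_def, THEN conjunct2]] by blast
  have lim: "((\<lambda>\<rho>. X i j (complex_of_real \<rho> * cis t)) \<longlongrightarrow> bval (X i j) t) (at_left 1)"
    if ij: "i < n" "j < m" for i j
  proof -
    obtain L where L: "((\<lambda>\<rho>. X i j (complex_of_real \<rho> * cis t)) \<longlongrightarrow> L) (at_left 1)"
      using t(1) ij unfolding has_radial_limit_def by blast
    then have "bval (X i j) t = L" unfolding bval_def by (intro tendsto_Lim) auto
    then show ?thesis using L by simp
  qed
  define B where "B \<rho> j k = (\<Sum>i<n. cnj (X i j (complex_of_real \<rho> * cis t)) * X i k (complex_of_real \<rho> * cis t))" for \<rho> j k
  have limB: "((\<lambda>\<rho>. B \<rho> j k) \<longlongrightarrow> (if j = k then 1 else 0)) (at_left 1)" if "j < m" "k < m" for j k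
  proof -
    have "((\<lambda>\<rho>. B \<rho> j k) \<longlongrightarrow> (\<Sum>i<n. cnj (bval (X i j) t) * bval (X i k) t)) (at_left 1)"
      unfolding B_def using that by (intro tendsto_sum tendsto_mult tendsto_cnj lim) auto
    then show ?thesis using t(2) that by simp
  qed
  define \<epsilon> :: real where "\<epsilon> = 1 / (real m + 1)"
  have \<epsilon>pos: "\<epsilon> > 0" unfolding \<epsilon>_def by simp
  have ev: "eventually (\<lambda>\<rho>. \<forall>p\<in>{..<m} \<times> {..<m}. dist (B \<rho> (fst p) (snd p)) (if fst p = snd p then 1 else 0) < \<epsilon>) (at_left 1)"
  proof (intro eventually_ball_finite ballI)
    fix p assume "p \<in> {..<m} \<times> {..<m}"
    then have "fst p < m" "snd p < m" by auto
    from tendstoD[OF limB[OF this] \<epsilon>pos]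
    show "eventually (\<lambda>\<rho>. dist (B \<rho> (fst p) (snd p)) (if fst p = snd p then 1 else 0) < \<epsilon>) (at_left 1)" .
  qed simp
  moreover have "eventually (\<lambda>\<rho>. \<rho> \<in> {0<..<1}) (at_left (1::real))"
    by (rule eventually_at_left_real) simp
  ultimately have evc: "eventually (\<lambda>\<rho>. (\<forall>p\<in>{..<m} \<times> {..<m}. dist (B \<rho> (fst p) (snd p)) (if fst p = snd p then 1 else 0) < \<epsilon>) \<and> \<rho> \<in> {0<..<1}) (at_left 1)"
    by (rule eventually_conj)
  have nb: "at_left (1::real) \<noteq> bot" using trivial_limit_at_left_real by blast
  obtain \<rho> where \<rho>0: "(\<forall>p\<in>{..<m} \<times> {..<m}. dist (B \<rho> (fst p) (snd p)) (if fst p = snd p then 1 else 0) < \<epsilon>)"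
      and \<rho>: "\<rho> \<in> {0<..<1}"
    using eventually_happens'[OF nb evc] by blast
  have close: "cmod (B \<rho> j k - (if j = k then 1 else 0)) < \<epsilon>" if "j < m" "k < m" for j k
    using \<rho>0[rule_format, of "(j,k)"] that by (simp add: dist_norm)
  define z where "z = complex_of_real \<rho> * cis t"
  have zb: "z \<in> ball 0 1" using \<rho> by (simp add: z_def norm_mult)
  show ?thesis
  proof (rule bexI[OF _ zb], rule allI, rule impI)
    fix x assume kern: "\<forall>a<n. (\<Sum>k<m. X a k z * x k) = 0"
    show "\<forall>k<m. x k = 0"
    proof (rule ccontr)
      assume "\<not> (\<forall>k<m. x k = 0)"
      then obtain k0 where k0: "k0 < m" "x k0 \<noteq> 0" by auto
      define S where "S = (\<Sum>j<m. (cmod (x j))\<^sup>2)"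
      have Spos: "S > 0" unfolding S_def
        by (rule sum_pos2[of _ k0]) (use k0 in auto)
      define E where "E = (\<Sum>j<m. \<Sum>k<m. cnj (x j) * x k * (B \<rho> j k - (if j = k then 1 else 0)))"
      have "(\<Sum>j<m. \<Sum>k<m. cnj (x j) * x k * B \<rho> j k) =
         (\<Sum>a<n. (\<Sum>j<m. cnj (x j) * cnj (X a j z)) * (\<Sum>k<m. X a k z * x k))"
        unfolding B_def z_def by (rule quad_identity)
      also have "\<dots> = 0" using kern by simp
      finally have Q0: "(\<Sum>j<m. \<Sum>k<m. cnj (x j) * x k * B \<rho> j k) = 0" .
      have diag: "(\<Sum>j<m. \<Sum>k<m. cnj (x j) * x k * (if j = k then 1 else 0)) = complex_of_real S"
      proof -
        have "(\<Sum>j<m. \<Sum>k<m. cnj (x j) * x k * (if j = k then 1 else 0)) = (\<Sum>j<m. cnj (x j) * x j)"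
        proof (intro sum.cong refl)
          fix j assume "j \<in> {..<m}"
          have "(\<Sum>k<m. cnj (x j) * x k * (if j = k then 1 else 0)) = (\<Sum>k<m. if k = j then cnj (x j) * x j else 0)"
            by (intro sum.cong refl) auto
          also have "\<dots> = cnj (x j) * x j" using \<open>j \<in> {..<m}\<close> by (subst sum.delta) auto
          finally show "(\<Sum>k<m. cnj (x j) * x k * (if j = k then 1 else 0)) = cnj (x j) * x j" .
        qed
        also have "\<dots> = (\<Sum>j<m. complex_of_real ((cmod (x j))\<^sup>2))"
          by (intro sum.cong refl) (simp only: complex_norm_square mult.commute)
        finally show ?thesis unfolding S_def by simp
      qed
      have "(\<Sum>j<m. \<Sum>k<m. cnj (x j) * x k * B \<rho> j k) = complex_of_real S + E"
      proof -
        have "(\<Sum>j<m. \<Sum>k<m. cnj (x j) * x k * B \<rho> j k) = (\<Sum>j<m. \<Sum>k<m. cnj (x j) * x k * (if j = k then 1 else 0)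
            + cnj (x j) * x k * (B \<rho> j k - (if j = k then 1 else 0)))"
          by (intro sum.cong refl) (simp add: algebra_simps)
        also have "\<dots> = (\<Sum>j<m. \<Sum>k<m. cnj (x j) * x k * (if j = k then 1 else 0)) + E"
          unfolding E_def by (simp only: sum.distrib)
        finally show ?thesis unfolding diag .
      qed
      then have SE: "complex_of_real S = - E" using Q0 by (simp add: eq_neg_iff_add_eq_0 add.commute)
      have "cmod E \<le> (\<Sum>j<m. \<Sum>k<m. cmod (cnj (x j) * x k * (B \<rho> j k - (if j = k then 1 else 0))))"
        unfolding E_def by (rule order_trans[OF norm_sum sum_mono[OF norm_sum]])
      also have "\<dots> \<le> (\<Sum>j<m. \<Sum>k<m. \<epsilon> * (cmod (x j) * cmod (x k)))"
      proof (intro sum_mono)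
        fix j k assume "j \<in> {..<m}" "k \<in> {..<m}"
        then have "cmod (B \<rho> j k - (if j = k then 1 else 0)) \<le> \<epsilon>" using close by (simp add: less_imp_le)
        then show "cmod (cnj (x j) * x k * (B \<rho> j k - (if j = k then 1 else 0))) \<le> \<epsilon> * (cmod (x j) * cmod (x k))"
        proof -
          let ?d = "B \<rho> j k - (if j = k then 1 else 0)"
          have "cmod (cnj (x j) * x k * ?d) = (cmod (x j) * cmod (x k)) * cmod ?d"
            by (simp only: norm_mult complex_mod_cnj)
          also have "\<dots> \<le> (cmod (x j) * cmod (x k)) * \<epsilon>"
            by (rule mult_left_mono[OF \<open>cmod ?d \<le> \<epsilon>\<close>]) simp
          finally show ?thesis by (simp only: mult.commute)
        qed
      qed
      also have "\<dots> = \<epsilon> * (\<Sum>j<m. \<Sum>k<m. cmod (x j) * cmod (x k))"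
        by (simp add: sum_distrib_left)
      also have "\<dots> \<le> \<epsilon> * (real m * S)"
        using double_sum_le[of "{..<m}" "\<lambda>j. cmod (x j)"] \<epsilon>pos unfolding S_def
        by (intro mult_left_mono) auto
      also have "\<dots> < S"
      proof -
        have "\<epsilon> * real m < 1" unfolding \<epsilon>_def by (simp add: field_simps)
        then show ?thesis using Spos by (simp add: mult.assoc[symmetric])
      qed
      finally have "cmod E < S" .
      moreover have "cmod E = S"
      proof -
        have "cmod E = cmod (- E)" by (rule norm_minus_cancel[symmetric])
        also have "\<dots> = cmod (complex_of_real S)" using SE by simp
        also have "\<dots> = S" using Spos by simp
        finally show ?thesis .
      qed
      ultimately show False by simp
    qed
  qed
qed

lemma H2_ind: "(\<lambda>z. if z \<in> ball 0 1 then 1 else 0) \<in> H2"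
  using BH_H2[OF BH_const[of 1]] .

lemma unit_H2vec:
  assumes "j < l"
  shows "(\<lambda>k z. if k = j \<and> z \<in> ball 0 1 then 1 else 0) \<in> H2vec l"
proof -
  have "(\<lambda>z. if k = j \<and> z \<in> ball 0 1 then 1 else 0) \<in> H2" if "k < l" for k
  proof (cases "k = j")
    case True then show ?thesis using H2_ind by simp
  next
    case False
    then have "(\<lambda>z. if k = j \<and> z \<in> ball 0 1 then 1 else 0) = (\<lambda>z. if z \<in> ball 0 1 then 0 else 0)" by simp
    also have "\<dots> \<in> H2" using BH_H2[OF BH_const[of 0]] .
    finally show ?thesis .
  qed
  then show ?thesis unfolding H2vec_def using assms by auto
qed

lemma col_in_range:
  assumes "j < l" "z \<in> ball 0 1"
  shows "\<exists>F\<in>mat_range l X. \<forall>a. F a z = X a j z"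
proof -
  let ?E = "\<lambda>k z. if k = j \<and> z \<in> ball 0 1 then 1 else (0::complex)"
  have mem: "(\<lambda>a z. \<Sum>k<l. X a k z * ?E k z) \<in> mat_range l X"
    unfolding mat_range_def
    by (rule CollectI, rule exI[of _ ?E], intro conjI refl unit_H2vec[OF assms(1)])
  have eq: "(\<Sum>k<l. X a k z * ?E k z) = X a j z" for a
  proof -
    have "(\<Sum>k<l. X a k z * ?E k z) = (\<Sum>k<l. if k = j then X a j z else 0)"
      by (intro sum.cong refl) (use assms in auto)
    also have "\<dots> = X a j z" using assms by (subst sum.delta) auto
    finally show ?thesis .
  qed
  show ?thesis by (rule bexI[OF _ mem], intro allI, rule eq)
qed

lemma UB:
  assumes X1: "inner_mat n m1 X1" and X: "inner_mat n l X"
    and sub: "mat_range l X \<subseteq> mat_range m1 X1"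
  shows "l \<le> m1"
proof (rule ccontr)
  assume "\<not> l \<le> m1"
  then have lt: "m1 < l" by simp
  obtain z where z: "z \<in> ball 0 1"
    and inj: "\<And>x. (\<forall>a<n. (\<Sum>k<l. X a k z * x k) = 0) \<Longrightarrow> (\<forall>k<l. x k = 0)"
    using NB[OF X] by blast
  have "\<exists>g. \<forall>a. X a j z = (\<Sum>k<m1. X1 a k z * g k)" if jl: "j < l" for j
  proof -
    obtain F where F: "F \<in> mat_range l X" "\<And>a. F a z = X a j z"
      using col_in_range[OF jl z] by blast
    then have "F \<in> mat_range m1 X1" using sub by blast
    then obtain G where G: "F = (\<lambda>a z. \<Sum>k<m1. X1 a k z * G k z)"
      unfolding mat_range_def by blast
    have "X a j z = (\<Sum>k<m1. X1 a k z * G k z)" for a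
      using F(2)[of a] unfolding G by simp
    then show ?thesis by (intro exI[of _ "\<lambda>k. G k z"]) blast
  qed
  then have "\<forall>j. \<exists>g. j < l \<longrightarrow> (\<forall>a. X a j z = (\<Sum>k<m1. X1 a k z * g k))" by blast
  from choice[OF this] obtain g where g0: "\<forall>j. j < l \<longrightarrow> (\<forall>a. X a j z = (\<Sum>k<m1. X1 a k z * g j k))"
    by blast
  then have g: "\<And>j a. j < l \<Longrightarrow> X a j z = (\<Sum>k<m1. X1 a k z * g j k)" by blast
  obtain y where y: "\<exists>j\<in>{..<l}. y j \<noteq> 0" "\<forall>k\<in>{..<m1}. (\<Sum>j\<in>{..<l}. g j k * y j) = 0"
    using L1[of "{..<m1}" "{..<l}" "\<lambda>k j. g j k"] lt by auto
  have "(\<Sum>j<l. X a j z * y j) = 0" for a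
  proof -
    have "(\<Sum>j<l. X a j z * y j) = (\<Sum>j<l. \<Sum>k<m1. X1 a k z * (g j k * y j))"
      by (intro sum.cong refl) (simp add: g sum_distrib_right sum_distrib_left mult_ac)
    also have "\<dots> = (\<Sum>k<m1. X1 a k z * (\<Sum>j<l. g j k * y j))"
      by (subst sum.swap) (simp add: sum_distrib_left)
    also have "\<dots> = 0" using y(2) by simp
    finally show ?thesis .
  qed
  then have "\<forall>k<l. y k = 0" using inj by blast
  then show False using y(1) by auto
qed

lemma minor_carrier: "length I = q \<Longrightarrow> length J = q \<Longrightarrow> minor B I J \<in> carrier_mat q q"
  unfolding minor_def by auto

lemma det_minor_rep_row:
  assumes "\<rho> \<in> set I" "length J = Suc (length I)"
  shows "Determinant.det (minor B (I@[\<rho>]) J) = 0"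
proof -
  obtain i where i: "i < length I" "I!i = \<rho>" using assms(1) by (auto simp: in_set_conv_nth)
  let ?q = "Suc (length I)"
  have A: "minor B (I@[\<rho>]) J \<in> carrier_mat ?q ?q" using assms(2) by (intro minor_carrier) auto
  show ?thesis
  proof (rule det_identical_rows[OF A, of i "length I"])
    show "Matrix.row (minor B (I@[\<rho>]) J) i = Matrix.row (minor B (I@[\<rho>]) J) (length I)"
      using i assms(2) by (intro eq_vecI) (auto simp: minor_def nth_append Matrix.row_def)
  qed (use i in auto)
qed

lemma cw_kernel:
  assumes dI: "distinct I" and dJ: "distinct J" and len: "length J = length I"
    and cJ: "c \<notin> set J" "c < m" and Jm: "set J \<subseteq> {..<m}" and IR: "set I \<subseteq> R" and \<rho>R: "\<rho> \<in> R"
    and van: "\<And>I' J'. distinct I' \<Longrightarrow> distinct J' \<Longrightarrow> length I' = Suc (length I) \<Longrightarrow> length J' = length I'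
         \<Longrightarrow> set I' \<subseteq> R \<Longrightarrow> set J' \<subseteq> {..<m} \<Longrightarrow> Determinant.det (minor B I' J') = 0"
  shows "(\<Sum>k<m. B \<rho> k * cw B I J c k) = 0"
proof -
  have "(\<Sum>k<m. B \<rho> k * cw B I J c k) = Determinant.det (minor B (I@[\<rho>]) (J@[c]))"
    by (rule cw_row) (use assms in auto)
  also have "\<dots> = 0"
  proof (cases "\<rho> \<in> set I")
    case True then show ?thesis using len by (intro det_minor_rep_row) auto
  next
    case False then show ?thesis using assms by (intro van) auto
  qed
  finally show ?thesis .
qed

definition Lmat :: "(nat \<Rightarrow> nat \<Rightarrow> complex) \<Rightarrow> nat list \<Rightarrow> nat list \<Rightarrow> nat \<Rightarrow> nat \<Rightarrow> nat \<Rightarrow> complex" where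
  "Lmat X I J m k j = (\<Sum>b'<m. if J!b' = k then (\<Sum>b<m. if I!b = j then adj_mat (minor X I J) $$ (b',b) else 0) else 0)"

lemma setJ_full:
  assumes "distinct J" "length J = m" "set J \<subseteq> {..<m}"
  shows "set J = {..<m}"
  using assms by (intro card_subset_eq) (auto simp: distinct_card)

lemma Lmat_apply:
  assumes "distinct I" "length I = m" "set I \<subseteq> {..<n}"
  shows "(\<Sum>j<n. Lmat X I J m k j * F j) =
     (\<Sum>b'<m. if J!b' = k then (\<Sum>b<m. adj_mat (minor X I J) $$ (b',b) * F (I!b)) else 0)"
proof -
  have "(\<Sum>j<n. Lmat X I J m k j * F j) =
     (\<Sum>j<n. \<Sum>b'<m. if J!b' = k then (\<Sum>b<m. if I!b = j then adj_mat (minor X I J) $$ (b',b) * F j else 0) else 0)"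
    unfolding Lmat_def sum_distrib_right by (intro sum.cong refl) (auto simp: sum_distrib_right intro!: sum.cong)
  also have "\<dots> = (\<Sum>b'<m. \<Sum>j<n. if J!b' = k then (\<Sum>b<m. if I!b = j then adj_mat (minor X I J) $$ (b',b) * F j else 0) else 0)"
    by (rule sum.swap)
  also have "\<dots> = (\<Sum>b'<m. if J!b' = k then (\<Sum>b<m. adj_mat (minor X I J) $$ (b',b) * F (I!b)) else 0)"
  proof (intro sum.cong refl)
    fix b' assume "b' \<in> {..<m}"
    have "(\<Sum>j<n. \<Sum>b<m. if I!b = j then adj_mat (minor X I J) $$ (b',b) * F j else 0)
        = (\<Sum>b<m. \<Sum>j<n. if I!b = j then adj_mat (minor X I J) $$ (b',b) * F j else 0)"
      by (rule sum.swap)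
    also have "\<dots> = (\<Sum>b<m. adj_mat (minor X I J) $$ (b',b) * F (I!b))"
    proof (intro sum.cong refl)
      fix b assume "b \<in> {..<m}"
      then have "b < length I" using assms(2) by simp
      then have "I!b \<in> set I" by (rule nth_mem)
      then have "I!b \<in> {..<n}" using assms(3) by blast
      then show "(\<Sum>j<n. if I!b = j then adj_mat (minor X I J) $$ (b',b) * F j else 0) = adj_mat (minor X I J) $$ (b',b) * F (I!b)"
        by (simp add: sum.delta)
    qed
    finally show "(\<Sum>j<n. if J!b' = k then (\<Sum>b<m. if I!b = j then adj_mat (minor X I J) $$ (b',b) * F j else 0) else 0)
       = (if J!b' = k then (\<Sum>b<m. adj_mat (minor X I J) $$ (b',b) * F (I!b)) else 0)"
      by simp
  qed
  finally show ?thesis .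
qed

lemma Lmat_left_inv:
  assumes dI: "distinct I" "length I = m" "set I \<subseteq> {..<n}"
    and dJ: "distinct J" "length J = m" "set J \<subseteq> {..<m}" and k: "k < m"
  shows "(\<Sum>j<n. Lmat X I J m k j * (\<Sum>k'<m. X j k' * x k')) = Determinant.det (minor X I J) * x k"
proof -
  let ?A = "minor X I J"
  let ?D = "Determinant.det ?A"
  have A: "?A \<in> carrier_mat m m" using dI dJ by (intro minor_carrier) auto
  have sJ: "set J = {..<m}" using setJ_full dJ by blast
  have bij: "bij_betw ((!) J) {..<m} {..<m}" by (rule bij_betw_nth) (use dJ sJ in auto)
  have inner: "(\<Sum>b<m. adj_mat ?A $$ (b',b) * (\<Sum>k'<m. X (I!b) k' * x k')) = ?D * x (J!b')"
    if b': "b' < m" for b'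
  proof -
    have re: "(\<Sum>k'<m. X (I!b) k' * x k') = (\<Sum>b''<m. ?A $$ (b,b'') * x (J!b''))" if "b < m" for b
    proof -
      have "(\<Sum>k'<m. X (I!b) k' * x k') = (\<Sum>b''<m. X (I!b) (J!b'') * x (J!b''))"
        using sum.reindex_bij_betw[OF bij, of "\<lambda>k'. X (I!b) k' * x k'"] by simp
      also have "\<dots> = (\<Sum>b''<m. ?A $$ (b,b'') * x (J!b''))"
        using that dI dJ by (intro sum.cong refl) (simp add: minor_def)
      finally show ?thesis .
    qed
    have "(\<Sum>b<m. adj_mat ?A $$ (b',b) * (\<Sum>k'<m. X (I!b) k' * x k'))
        = (\<Sum>b<m. \<Sum>b''<m. adj_mat ?A $$ (b',b) * ?A $$ (b,b'') * x (J!b''))"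
      by (intro sum.cong refl) (simp add: re sum_distrib_left mult.assoc)
    also have "\<dots> = (\<Sum>b''<m. \<Sum>b<m. adj_mat ?A $$ (b',b) * ?A $$ (b,b'') * x (J!b''))"
      by (rule sum.swap)
    also have "\<dots> = (\<Sum>b''<m. (adj_mat ?A * ?A) $$ (b',b'') * x (J!b''))"
    proof (intro sum.cong refl)
      fix b'' assume "b'' \<in> {..<m}"
      then have "(adj_mat ?A * ?A) $$ (b',b'') = (\<Sum>b<m. adj_mat ?A $$ (b',b) * ?A $$ (b,b''))"
        using A b' adj_mat(1)[OF A]
        by (simp add: scalar_prod_def atLeast0LessThan)
      then show "(\<Sum>b<m. adj_mat ?A $$ (b',b) * ?A $$ (b,b'') * x (J!b'')) = (adj_mat ?A * ?A) $$ (b',b'') * x (J!b'')"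
        by (simp add: sum_distrib_right)
    qed
    also have "\<dots> = (\<Sum>b''<m. if b'' = b' then ?D * x (J!b'') else 0)"
      using adj_mat(3)[OF A] b' by (intro sum.cong refl) auto
    also have "\<dots> = ?D * x (J!b')" using b' by (subst sum.delta) auto
    finally show ?thesis .
  qed
  have "(\<Sum>j<n. Lmat X I J m k j * (\<Sum>k'<m. X j k' * x k'))
      = (\<Sum>b'<m. if J!b' = k then (\<Sum>b<m. adj_mat ?A $$ (b',b) * (\<Sum>k'<m. X (I!b) k' * x k')) else 0)"
    by (rule Lmat_apply[OF dI])
  also have "\<dots> = (\<Sum>b'<m. if J!b' = k then ?D * x k else 0)"
    by (intro sum.cong refl) (auto simp: inner)
  also have "\<dots> = ?D * x k"
  proof -
    obtain b0 where b0: "b0 < m" "J!b0 = k" using k sJ dJ by (metis in_set_conv_nth lessThan_iff)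
    have "(\<Sum>b'<m. if J!b' = k then ?D * x k else 0) = (\<Sum>b'<m. if b' = b0 then ?D * x k else 0)"
    proof (intro sum.cong refl)
      fix b' assume "b' \<in> {..<m}"
      then have "J!b' = k \<longleftrightarrow> b' = b0" using b0 dJ by (auto simp: nth_eq_iff_index_eq)
      then show "(if J!b' = k then ?D * x k else 0) = (if b' = b0 then ?D * x k else 0)" by simp
    qed
    also have "\<dots> = ?D * x k" using b0 by (subst sum.delta) auto
    finally show ?thesis .
  qed
  finally show ?thesis .
qed

lemma det_minor_nil: "Determinant.det (minor B [] []) = 1"
  unfolding minor_def Determinant.det_def by simp

lemma distinct_len_le:
  assumes "distinct J" "set J \<subseteq> {..<m}"
  shows "length J \<le> m"
proof -
  have "length J = card (set J)" using assms(1) by (simp add: distinct_card)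
  also have "\<dots> \<le> card {..<m}" using assms(2) by (intro card_mono) auto
  finally show ?thesis by simp
qed

lemma maxminor_full:
  fixes B :: "'r \<Rightarrow> nat \<Rightarrow> complex"
  assumes inj: "\<And>x. (\<forall>\<rho>\<in>R. (\<Sum>k<m. B \<rho> k * x k) = 0) \<Longrightarrow> (\<forall>k<m. x k = 0)"
  shows "\<exists>I J. distinct I \<and> distinct J \<and> length I = m \<and> length J = m \<and> set I \<subseteq> R \<and> set J \<subseteq> {..<m}
     \<and> Determinant.det (minor B I J) \<noteq> 0"
proof -
  define Q where "Q = {q. \<exists>I J. distinct I \<and> distinct J \<and> length I = q \<and> length J = q \<and> set I \<subseteq> R \<and> set J \<subseteq> {..<m}
     \<and> Determinant.det (minor B I J) \<noteq> 0}"
  have Qsub: "Q \<subseteq> {..m}" unfolding Q_def using distinct_len_le by fastforce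
  then have finQ: "finite Q" by (rule finite_subset) simp
  have "0 \<in> Q" unfolding Q_def
    by (rule CollectI, rule exI[of _ "[]"], rule exI[of _ "[]"]) (simp add: det_minor_nil)
  then have QM: "Max Q \<in> Q" using finQ by (intro Max_in) auto
  define q where "q = Max Q"
  have qle: "q \<le> m" using QM Qsub unfolding q_def by auto
  obtain I J where IJ: "distinct I" "distinct J" "length I = q" "length J = q" "set I \<subseteq> R" "set J \<subseteq> {..<m}"
     "Determinant.det (minor B I J) \<noteq> 0"
  proof -
    have "q \<in> Q" using QM by (simp add: q_def)
    then show ?thesis using that unfolding Q_def by blast
  qed
  have "q = m"
  proof (rule ccontr)
    assume "q \<noteq> m"
    then have "q < m" using qle by simp
    have "card (set J) = q" using IJ by (simp add: distinct_card)
    then have "set J \<noteq> {..<m}" using \<open>q < m\<close> by (metis card_lessThan less_irrefl)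
    then obtain c where c: "c < m" "c \<notin> set J" using IJ(6) by auto
    have van: "Determinant.det (minor B I' J') = 0"
      if "distinct I'" "distinct J'" "length I' = Suc (length I)" "length J' = length I'" "set I' \<subseteq> R" "set J' \<subseteq> {..<m}"
      for I' J'
    proof (rule ccontr)
      assume "Determinant.det (minor B I' J') \<noteq> 0"
      then have "Suc q \<in> Q" unfolding Q_def using that IJ(3) by auto
      then have "Suc q \<le> q" unfolding q_def using finQ by (intro Max_ge)
      then show False by simp
    qed
    have "\<forall>\<rho>\<in>R. (\<Sum>k<m. B \<rho> k * cw B I J c k) = 0"
    proof
      fix \<rho> assume "\<rho> \<in> R"
      show "(\<Sum>k<m. B \<rho> k * cw B I J c k) = 0"
        by (rule cw_kernel[where R = R]) (use IJ c \<open>\<rho> \<in> R\<close> van in auto)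
    qed
    then have "cw B I J c c = 0" using inj c(1) by blast
    moreover have "cw B I J c c = Determinant.det (minor B I J)" using IJ c by (intro cw_c) auto
    ultimately show False using IJ(7) by simp
  qed
  then show ?thesis using IJ by blast
qed

lemma full_minor:
  assumes "inner_mat n m X"
  shows "\<exists>I J. distinct I \<and> length I = m \<and> set I \<subseteq> {..<n} \<and> distinct J \<and> length J = m \<and> set J \<subseteq> {..<m}
     \<and> (\<exists>z\<in>ball 0 1. Determinant.det (minor (\<lambda>a k. X a k z) I J) \<noteq> 0)"
proof -
  obtain z where z: "z \<in> ball 0 1"
    and inj: "\<And>x. (\<forall>a<n. (\<Sum>k<m. X a k z * x k) = 0) \<Longrightarrow> (\<forall>k<m. x k = 0)"
    using NB[OF assms] by blast
  have "\<exists>I J. distinct I \<and> distinct J \<and> length I = m \<and> length J = m \<and> set I \<subseteq> {..<n} \<and> set J \<subseteq> {..<m}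
     \<and> Determinant.det (minor (\<lambda>a k. X a k z) I J) \<noteq> 0"
    by (rule maxminor_full) (use inj in auto)
  then show ?thesis using z by blast
qed

lemma inner_BH: "inner_mat n m X \<Longrightarrow> BH (X a k)"
  unfolding inner_mat_def Hinf_mat_def
  by (cases "a < n \<and> k < m") (auto intro: Hinf_BH simp: BH_const)

lemma inner_out: "inner_mat n m X \<Longrightarrow> z \<notin> ball 0 1 \<Longrightarrow> X a k z = 0"
  unfolding inner_mat_def Hinf_mat_def Hinf_def
  by (cases "a < n \<and> k < m") auto

lemma inner_row: "inner_mat n m X \<Longrightarrow> \<not> a < n \<Longrightarrow> X a k z = 0"
  unfolding inner_mat_def Hinf_mat_def by auto

lemma BH_hol: "BH f \<Longrightarrow> f holomorphic_on ball 0 1"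
  unfolding BH_def by simp

lemma BH_cont: "BH f \<Longrightarrow> continuous_on (ball 0 1) f"
  using BH_hol holomorphic_on_imp_continuous_on by blast

lemma mult_nonzero_somewhere:
  assumes g: "BH g" "z1 \<in> ball 0 1" "g z1 \<noteq> 0" and h: "BH h" "z2 \<in> ball 0 1" "h z2 \<noteq> 0"
  shows "\<exists>z\<in>ball 0 1. g z * h z \<noteq> 0"
proof (rule ccontr)
  assume "\<not> (\<exists>z\<in>ball 0 1. g z * h z \<noteq> 0)"
  then have gh: "\<And>z. z \<in> ball 0 1 \<Longrightarrow> g z * h z = 0" by blast
  define S where "S = ball 0 1 \<inter> g -` (- {0})"
  have "open S" unfolding S_def
    by (rule continuous_open_preimage[OF BH_cont[OF g(1)]]) auto
  have "z1 \<in> S" using g unfolding S_def by auto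
  have "h z2 = 0"
  proof (rule analytic_continuation_open[where f = h and g = "\<lambda>_. 0" and z = z2 and s = S and s' = "ball 0 1"])
    show "S \<noteq> {}" using \<open>z1 \<in> S\<close> by blast
    show "S \<subseteq> ball 0 1" unfolding S_def by blast
    show "h holomorphic_on ball 0 1" using BH_hol[OF h(1)] .
    show "(\<lambda>_. 0) holomorphic_on ball 0 1" by simp
    fix z assume "z \<in> S"
    then show "h z = 0" using gh[of z] unfolding S_def by auto
  qed (use \<open>open S\<close> h(2) in auto)
  then show False using h(3) by simp
qed

lemma prod_nonzero:
  fixes r :: nat
  assumes "\<And>i. i < r \<Longrightarrow> BH (f i)" "\<And>i. i < r \<Longrightarrow> \<exists>z\<in>ball 0 1. f i z \<noteq> 0"
  shows "\<exists>z\<in>ball 0 1. (\<Prod>i<r. f i z) \<noteq> 0"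
  using assms
proof (induction r)
  case 0
  then show ?case by (intro bexI[of _ 0]) auto
next
  case (Suc r)
  obtain z1 where z1: "z1 \<in> ball 0 1" "(\<Prod>i<r. f i z1) \<noteq> 0" using Suc by auto
  obtain z2 where z2: "z2 \<in> ball 0 1" "f r z2 \<noteq> 0" using Suc.prems(2)[of r] by auto
  have "BH (\<lambda>z. \<Prod>i<r. f i z)" using Suc.prems(1) by (intro BH_prod) auto
  from mult_nonzero_somewhere[OF this z1 Suc.prems(1)[of r] z2]
  show ?case by (simp add: mult.commute)
qed

lemma delta_sum:
  assumes "finite A" "a \<in> A"
  shows "(\<Sum>j\<in>A. (if a = j then c else 0) * f j) = c * (f a :: complex)"
proof -
  have "(\<Sum>j\<in>A. (if a = j then c else 0) * f j) = (\<Sum>j\<in>A. if a = j then c * f j else 0)"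
    by (intro sum.cong refl) auto
  also have "\<dots> = c * f a" using assms by (simp add: sum.delta)
  finally show ?thesis .
qed

locale LB =
  fixes r n l :: nat and m :: "nat \<Rightarrow> nat" and Ts :: "nat \<Rightarrow> matfun" and T :: matfun
    and II JJ :: "nat \<Rightarrow> nat list"
  assumes r1: "r \<ge> 1"
    and inner: "\<And>i. i < r \<Longrightarrow> inner_mat n (m i) (Ts i)"
    and innerT: "inner_mat n l T"
    and eqR: "(\<Inter>i<r. mat_range (m i) (Ts i)) = mat_range l T"
    and II: "\<And>i. i < r \<Longrightarrow> distinct (II i) \<and> length (II i) = m i \<and> set (II i) \<subseteq> {..<n}"
    and JJ: "\<And>i. i < r \<Longrightarrow> distinct (JJ i) \<and> length (JJ i) = m i \<and> set (JJ i) \<subseteq> {..<m i}"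
    and Dnz: "\<And>i. i < r \<Longrightarrow> \<exists>z\<in>ball 0 1. Determinant.det (minor (\<lambda>a k. Ts i a k z) (II i) (JJ i)) \<noteq> 0"
begin

definition D where "D i z = Determinant.det (minor (\<lambda>a k. Ts i a k z) (II i) (JJ i))"
definition Lm where "Lm i k j z = Lmat (\<lambda>a k. Ts i a k z) (II i) (JJ i) (m i) k j"
definition M where "M \<rho> j z = (if fst \<rho> < r then (\<Sum>k<m (fst \<rho>). Ts (fst \<rho>) (snd \<rho>) k z * Lm (fst \<rho>) k j z) - (if snd \<rho> = j then D (fst \<rho>) z else 0) else 0)"
definition PD where "PD z = (\<Prod>i<r. D i z)"
definition U where "U = {z \<in> ball 0 1. PD z \<noteq> 0}"

lemma M_simp: "i < r \<Longrightarrow> M (i,a) j z = (\<Sum>k<m i. Ts i a k z * Lm i k j z) - (if a = j then D i z else 0)"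
  unfolding M_def by simp

lemma BH_Ts: "i < r \<Longrightarrow> BH (\<lambda>z. Ts i a k z)"
  using inner_BH[OF inner] by simp

lemma BH_D: "i < r \<Longrightarrow> BH (D i)"
proof -
  assume i: "i < r"
  have "BH (\<lambda>z. Determinant.det (minor (\<lambda>a k. Ts i a k z) (II i) (JJ i)))"
    by (rule BH_minor) (rule BH_Ts[OF i])
  then show ?thesis unfolding D_def[abs_def] .
qed

lemma BH_adj:
  assumes i: "i < r" and b: "b' < m i" "b < m i"
  shows "BH (\<lambda>z. adj_mat (minor (\<lambda>a k. Ts i a k z) (II i) (JJ i)) $$ (b', b))"
proof -
  have car: "minor (\<lambda>a k. Ts i a k z) (II i) (JJ i) \<in> carrier_mat (m i) (m i)" for z
    using II[OF i] JJ[OF i] by (intro minor_carrier) auto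
  have eq: "adj_mat (minor (\<lambda>a k. Ts i a k z) (II i) (JJ i)) $$ (b', b) = cofactor (minor (\<lambda>a k. Ts i a k z) (II i) (JJ i)) b b'" for z
    unfolding adj_mat_def using car[of z] b by auto
  have "BH (\<lambda>z. cofactor (minor (\<lambda>a k. Ts i a k z) (II i) (JJ i)) b b')"
  proof (rule BH_cofactor[OF car])
    fix a c assume "a < m i" "c < m i"
    then have "minor (\<lambda>a k. Ts i a k z) (II i) (JJ i) $$ (a, c) = Ts i (II i ! a) (JJ i ! c) z" for z
      using II[OF i] JJ[OF i] unfolding minor_def by auto
    then show "BH (\<lambda>z. minor (\<lambda>a k. Ts i a k z) (II i) (JJ i) $$ (a, c))"
      using BH_Ts[OF i] by simp
  qed
  then show ?thesis unfolding eq .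
qed

lemma BH_Lm: "i < r \<Longrightarrow> BH (Lm i k j)"
proof -
  assume i: "i < r"
  have "BH (\<lambda>z. \<Sum>b'<m i. if JJ i ! b' = k then (\<Sum>b<m i. if II i ! b = j then
      adj_mat (minor (\<lambda>a k. Ts i a k z) (II i) (JJ i)) $$ (b',b) else 0) else 0)"
    by (intro BH_sum BH_if BH_const BH_adj[OF i]) auto
  then show ?thesis unfolding Lm_def[abs_def] Lmat_def .
qed

lemma BH_M: "BH (M \<rho> j)"
proof (cases "fst \<rho> < r")
  case True
  note i = True
  have "BH (\<lambda>z. (\<Sum>k<m (fst \<rho>). Ts (fst \<rho>) (snd \<rho>) k z * Lm (fst \<rho>) k j z) - (if snd \<rho> = j then D (fst \<rho>) z else 0))"
    by (intro BH_diff BH_sum BH_mult BH_if BH_Ts[OF i] BH_Lm[OF i] BH_D[OF i] BH_const)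
  then show ?thesis unfolding M_def[abs_def] using i by simp
next
  case False
  then show ?thesis unfolding M_def[abs_def] by (simp add: BH_const)
qed

lemma BH_PD: "BH PD"
proof -
  have "BH (\<lambda>z. \<Prod>i<r. D i z)" by (intro BH_prod BH_D) auto
  then show ?thesis unfolding PD_def[abs_def] .
qed

lemma U_sub: "U \<subseteq> ball 0 1" unfolding U_def by auto

lemma U_open: "open U"
proof -
  have "open (ball 0 1 \<inter> PD -` (- {0}))"
    by (rule continuous_open_preimage[OF BH_cont[OF BH_PD]]) auto
  moreover have "ball 0 1 \<inter> PD -` (- {0}) = U" unfolding U_def by auto
  ultimately show ?thesis by simp
qed

lemma U_ne: "U \<noteq> {}"
proof -
  have "\<exists>z\<in>ball 0 1. (\<Prod>i<r. D i z) \<noteq> 0"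
  proof (rule prod_nonzero)
    fix i assume i: "i < r"
    show "BH (D i)" by (rule BH_D[OF i])
    show "\<exists>z\<in>ball 0 1. D i z \<noteq> 0" using Dnz[OF i] unfolding D_def .
  qed
  then show ?thesis unfolding U_def PD_def by auto
qed

lemma D_U: "z \<in> U \<Longrightarrow> i < r \<Longrightarrow> D i z \<noteq> 0"
  unfolding U_def PD_def by auto

lemma Lm_left_inv:
  assumes i: "i < r" and k: "k < m i"
  shows "(\<Sum>j<n. Lm i k j z * (\<Sum>k'<m i. Ts i j k' z * x k')) = D i z * x k"
  unfolding Lm_def D_def
  by (rule Lmat_left_inv[where X = "\<lambda>a k. Ts i a k z", OF _ _ _ _ _ _ k]) (use II[OF i] JJ[OF i] in auto)

lemma F1:
  assumes i: "i < r" and a: "a < n"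
  shows "(\<Sum>j<n. M (i,a) j z * (\<Sum>k<m i. Ts i j k z * x k)) = 0"
proof -
  let ?v = "\<lambda>j. (\<Sum>k<m i. Ts i j k z * x k)"
  have "(\<Sum>j<n. M (i,a) j z * ?v j) = (\<Sum>j<n. (\<Sum>k<m i. Ts i a k z * Lm i k j z) * ?v j) - (\<Sum>j<n. (if a = j then D i z else 0) * ?v j)"
    unfolding M_simp[OF i] left_diff_distrib by (rule sum_subtractf)
  also have "(\<Sum>j<n. (if a = j then D i z else 0) * ?v j) = D i z * ?v a"
    using a by (intro delta_sum) auto
  also have "(\<Sum>j<n. (\<Sum>k<m i. Ts i a k z * Lm i k j z) * ?v j) = (\<Sum>j<n. \<Sum>k<m i. Ts i a k z * (Lm i k j z * ?v j))"
    by (simp only: sum_distrib_right mult.assoc)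
  also have "\<dots> = (\<Sum>k<m i. \<Sum>j<n. Ts i a k z * (Lm i k j z * ?v j))"
    by (rule sum.swap)
  also have "\<dots> = (\<Sum>k<m i. Ts i a k z * (\<Sum>j<n. Lm i k j z * ?v j))"
    by (simp only: sum_distrib_left)
  also have "\<dots> = (\<Sum>k<m i. Ts i a k z * (D i z * x k))"
    by (intro sum.cong refl) (simp add: Lm_left_inv[OF i])
  also have "\<dots> = D i z * ?v a" by (simp add: sum_distrib_left mult_ac)
  finally show ?thesis by simp
qed

lemma F2:
  assumes i: "i < r" and a: "a < n" and w: "(\<Sum>j<n. M (i,a) j z * w j) = 0"
  shows "(\<Sum>k<m i. Ts i a k z * (\<Sum>j<n. Lm i k j z * w j)) = D i z * w a"
proof -
  have e0: "(\<Sum>j<n. (\<Sum>k<m i. Ts i a k z * Lm i k j z) * w j) - (\<Sum>j<n. (if a = j then D i z else 0) * w j) = 0"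
    using w unfolding M_simp[OF i] left_diff_distrib sum_subtractf .
  have e1: "(\<Sum>j<n. (if a = j then D i z else 0) * w j) = D i z * w a"
    using a by (intro delta_sum) auto
  have e2: "(\<Sum>j<n. (\<Sum>k<m i. Ts i a k z * Lm i k j z) * w j) = (\<Sum>k<m i. Ts i a k z * (\<Sum>j<n. Lm i k j z * w j))"
    by (simp add: sum_distrib_left sum_distrib_right mult.assoc sum.swap[of _ "{..<n}"])
  show ?thesis using e0 e1 e2 by simp
qed

lemma F3:
  assumes i: "i < r" and Dz: "D i z \<noteq> 0" and x: "\<forall>a<n. (\<Sum>k<m i. Ts i a k z * x k) = 0" and k: "k < m i"
  shows "x k = 0"
proof -
  have "D i z * x k = (\<Sum>j<n. Lm i k j z * (\<Sum>k'<m i. Ts i j k' z * x k'))"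
    by (rule Lm_left_inv[OF i k, symmetric])
  also have "\<dots> = 0" using x by simp
  finally show ?thesis using Dz by simp
qed

end

lemma sigma_pick:
  fixes m :: "nat \<Rightarrow> nat"
  assumes "i0 < r"
  shows "(\<Sum>p\<in>Sigma {..<r} (\<lambda>i. {..<m i}). if fst p = i0 then H p else (0::complex)) = (\<Sum>k<m i0. H (i0,k))"
proof -
  define G where "G p = (if fst p = i0 then H p else 0)" for p
  have "(\<Sum>i<r. \<Sum>k<m i. G (i,k)) = (\<Sum>(i,k)\<in>Sigma {..<r} (\<lambda>i. {..<m i}). G (i,k))"
    by (rule sum.Sigma) auto
  moreover have "(\<Sum>p\<in>Sigma {..<r} (\<lambda>i. {..<m i}). G p) = (\<Sum>(i,k)\<in>Sigma {..<r} (\<lambda>i. {..<m i}). G (i,k))"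
    by (intro sum.cong refl) (auto split: prod.split)
  ultimately have "(\<Sum>p\<in>Sigma {..<r} (\<lambda>i. {..<m i}). if fst p = i0 then H p else 0)
      = (\<Sum>i<r. \<Sum>k<m i. if i = i0 then H (i,k) else 0)"
    by (simp add: G_def)
  also have "\<dots> = (\<Sum>i<r. if i = i0 then (\<Sum>k<m i. H (i,k)) else 0)"
    by (intro sum.cong refl) auto
  also have "\<dots> = (\<Sum>k<m i0. H (i0,k))" using assms by (subst sum.delta) auto
  finally show ?thesis .
qed

lemma sum_over_list:
  fixes J :: "nat list"
  assumes "distinct J" "set J \<subseteq> {..<n}" "\<And>j. j < n \<Longrightarrow> j \<notin> set J \<Longrightarrow> f j = (0::complex)"
  shows "(\<Sum>j<n. f j) = (\<Sum>b<length J. f (J!b))"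
proof -
  have "(\<Sum>j<n. f j) = (\<Sum>j\<in>set J. f j)"
    by (rule sum.mono_neutral_right) (use assms in auto)
  also have "\<dots> = (\<Sum>b<length J. f (J!b))"
    using sum.reindex_bij_betw[OF bij_betw_nth[OF assms(1) refl refl], of f] by (simp add: lessThan_atLeast0)
  finally show ?thesis .
qed

context LB
begin

definition R where "R = {..<r} \<times> {..<n}"

definition Q where "Q = {q. \<exists>z\<in>U. \<exists>I J. distinct I \<and> distinct J \<and> length I = q \<and> length J = q \<and> set I \<subseteq> R
   \<and> set J \<subseteq> {..<n} \<and> Determinant.det (minor (\<lambda>\<rho> j. M \<rho> j z) I J) \<noteq> 0}"

definition s' where "s' = Max Q"

lemma Q_fin: "finite Q" and Q_in: "s' \<in> Q" and Q_le: "s' \<le> n"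
proof -
  have Qsub: "Q \<subseteq> {..n}" unfolding Q_def using distinct_len_le by fastforce
  then show fQ: "finite Q" by (rule finite_subset) simp
  obtain z where "z \<in> U" using U_ne by blast
  then have "0 \<in> Q" unfolding Q_def
    by (intro CollectI bexI[of _ z] exI[of _ "[]"]) (auto simp: det_minor_nil)
  then show "s' \<in> Q" unfolding s'_def using fQ by (intro Max_in) auto
  then show "s' \<le> n" using Qsub by auto
qed

lemma Q_max: "q \<in> Q \<Longrightarrow> q \<le> s'"
  unfolding s'_def by (rule Max_ge[OF Q_fin])

lemma van_U:
  assumes z: "z \<in> U" and "distinct I'" "distinct J'" "length I' = Suc s'" "length J' = length I'"
    "set I' \<subseteq> R" "set J' \<subseteq> {..<n}"
  shows "Determinant.det (minor (\<lambda>\<rho> j. M \<rho> j z) I' J') = 0"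
proof (rule ccontr)
  assume "Determinant.det (minor (\<lambda>\<rho> j. M \<rho> j z) I' J') \<noteq> 0"
  then have "Suc s' \<in> Q" unfolding Q_def using assms by auto
  then show False using Q_max by fastforce
qed

end

context LB
begin

lemma witness: "\<exists>z0\<in>U. \<exists>I J. distinct I \<and> distinct J \<and> length I = s' \<and> length J = s' \<and> set I \<subseteq> R
   \<and> set J \<subseteq> {..<n} \<and> Determinant.det (minor (\<lambda>\<rho> j. M \<rho> j z0) I J) \<noteq> 0"
  using Q_in unfolding Q_def by blast

lemma s_bound: "int s' + (\<Sum>i<r. int (m i)) \<le> int r * int n"
proof (rule ccontr)
  assume contra: "\<not> int s' + (\<Sum>i<r. int (m i)) \<le> int r * int n"
  obtain z0 I J where z0: "z0 \<in> U" and IJ: "distinct I" "distinct J" "length I = s'" "length J = s'" "set I \<subseteq> R"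
    "set J \<subseteq> {..<n}" and det0: "Determinant.det (minor (\<lambda>\<rho> j. M \<rho> j z0) I J) \<noteq> 0"
    using witness by blast
  define Bs where "Bs = Sigma {..<r} (\<lambda>i. {..<m i})"
  define As :: "((nat \<times> nat) + nat) set" where "As = Inl ` ({1..<r} \<times> {..<n}) \<union> Inr ` ({..<n} - set J)"
  have cardB: "card Bs = (\<Sum>i<r. m i)" unfolding Bs_def by (simp add: card_SigmaI)
  have cardA: "card As = (r - 1) * n + (n - s')"
  proof -
    have "card As = card (Inl ` ({1..<r} \<times> {..<n}) :: ((nat \<times> nat) + nat) set) + card (Inr ` ({..<n} - set J) :: ((nat \<times> nat) + nat) set)"
      unfolding As_def by (rule card_Un_disjoint) auto
    also have "card (Inl ` ({1..<r} \<times> {..<n}) :: ((nat \<times> nat) + nat) set) = (r - 1) * n"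
      by (subst card_image) (auto simp: card_cartesian_product)
    also have "card (Inr ` ({..<n} - set J) :: ((nat \<times> nat) + nat) set) = n - s'"
    proof -
      have "card (Inr ` ({..<n} - set J) :: ((nat \<times> nat) + nat) set) = card ({..<n} - set J)"
        by (rule card_image) auto
      also have "\<dots> = n - card (set J)" using IJ(6) by (subst card_Diff_subset) auto
      also have "card (set J) = s'" using IJ(2,4) by (simp add: distinct_card)
      finally show ?thesis .
    qed
    finally show ?thesis .
  qed
  have "int (card As) = int r * int n - int s'"
  proof -
    have "n \<le> r * n" using r1 by simp
    then have le: "s' \<le> r * n" using Q_le by linarith
    have "(r - 1) * n + (n - s') = r * n - s'" using r1 Q_le by (cases r) auto
    then have "card As = r * n - s'" unfolding cardA .
    then show ?thesis using le by (simp add: of_nat_diff)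
  qed
  moreover have "int (card Bs) = (\<Sum>i<r. int (m i))" unfolding cardB by simp
  ultimately have "card As < card Bs" using contra by linarith
  define cf where "cf e p = (case e of Inl ia \<Rightarrow> (if fst p = 0 then Ts 0 (snd ia) (snd p) z0 else 0)
      - (if fst p = fst ia then Ts (fst ia) (snd ia) (snd p) z0 else 0)
    | Inr j \<Rightarrow> (if fst p = 0 then Ts 0 j (snd p) z0 else 0))" for e :: "(nat \<times> nat) + nat" and p :: "nat \<times> nat"
  obtain x where x: "\<exists>p\<in>Bs. x p \<noteq> 0" "\<forall>e\<in>As. (\<Sum>p\<in>Bs. cf e p * x p) = 0"
    using L1[of As Bs cf] \<open>card As < card Bs\<close> unfolding As_def Bs_def by auto
  define v where "v i a = (\<Sum>k<m i. Ts i a k z0 * x (i,k))" for i a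
  have r0: "0 < r" using r1 by simp
  have eqInl: "(\<Sum>p\<in>Bs. cf (Inl (i,a)) p * x p) = v 0 a - v i a" if "i < r" for i a
  proof -
    have "(\<Sum>p\<in>Bs. cf (Inl (i,a)) p * x p) = (\<Sum>p\<in>Bs. (if fst p = 0 then Ts 0 a (snd p) z0 * x p else 0)
        - (if fst p = i then Ts i a (snd p) z0 * x p else 0))"
      unfolding cf_def by (intro sum.cong refl) (auto simp: algebra_simps)
    also have "\<dots> = v 0 a - v i a"
      unfolding sum_subtractf Bs_def v_def using sigma_pick[OF r0] sigma_pick[OF that] by simp
    finally show ?thesis .
  qed
  have eqInr: "(\<Sum>p\<in>Bs. cf (Inr j) p * x p) = v 0 j" for j
  proof -
    have "(\<Sum>p\<in>Bs. cf (Inr j) p * x p) = (\<Sum>p\<in>Bs. if fst p = 0 then Ts 0 j (snd p) z0 * x p else 0)"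
      unfolding cf_def by (intro sum.cong refl) auto
    also have "\<dots> = v 0 j"
      unfolding Bs_def v_def using sigma_pick[OF r0] by simp
    finally show ?thesis .
  qed
  have veq: "v i a = v 0 a" if "i < r" "a < n" for i a
  proof (cases "i = 0")
    case False
    then have "Inl (i,a) \<in> As" unfolding As_def using that by auto
    then have "(\<Sum>p\<in>Bs. cf (Inl (i,a)) p * x p) = 0" using x(2) by blast
    then show ?thesis using eqInl[OF that(1), of a] by simp
  qed simp
  have vJ: "v 0 j = 0" if "j < n" "j \<notin> set J" for j
  proof -
    have "Inr j \<in> As" unfolding As_def using that by auto
    then have "(\<Sum>p\<in>Bs. cf (Inr j) p * x p) = 0" using x(2) by blast
    then show ?thesis using eqInr[of j] by simp
  qed
  have vnz: "\<exists>j<n. v 0 j \<noteq> 0"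
  proof (rule ccontr)
    assume "\<not> (\<exists>j<n. v 0 j \<noteq> 0)"
    then have v0: "v i a = 0" if "i < r" "a < n" for i a using veq[OF that] that by auto
    have "x p = 0" if pB: "p \<in> Bs" for p
    proof -
      obtain i k where p: "p = (i,k)" "i < r" "k < m i" using pB unfolding Bs_def by auto
      have "\<forall>a<n. (\<Sum>k<m i. Ts i a k z0 * x (i,k)) = 0" using v0[OF p(2)] unfolding v_def by blast
      from F3[OF p(2) D_U[OF z0 p(2)] this p(3)] show ?thesis using p(1) by simp
    qed
    then show False using x(1) by blast
  qed
  have kern: "(\<Sum>j<n. M \<rho> j z0 * v 0 j) = 0" if \<rho>R: "\<rho> \<in> R" for \<rho>
  proof -
    obtain i a where ia: "\<rho> = (i,a)" "i < r" "a < n" using \<rho>R unfolding R_def by auto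
    have "(\<Sum>j<n. M \<rho> j z0 * v 0 j) = (\<Sum>j<n. M (i,a) j z0 * (\<Sum>k<m i. Ts i j k z0 * x (i,k)))"
      unfolding ia(1) by (intro sum.cong refl) (simp add: veq[OF ia(2)] v_def[symmetric])
    also have "\<dots> = 0" by (rule F1[OF ia(2,3)])
    finally show ?thesis .
  qed
  define A where "A = minor (\<lambda>\<rho> j. M \<rho> j z0) I J"
  have A: "A \<in> carrier_mat s' s'" unfolding A_def using IJ by (intro minor_carrier) auto
  define u where "u = Matrix.vec s' (\<lambda>b. v 0 (J!b))"
  have u: "u \<in> carrier_vec s'" unfolding u_def by simp
  have Au: "A *\<^sub>v u = 0\<^sub>v s'"
  proof (rule eq_vecI)
    fix a' assume "a' < dim_vec (0\<^sub>v s' :: complex vec)"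
    then have a': "a' < s'" by simp
    have "(A *\<^sub>v u) $ a' = (\<Sum>b<s'. M (I!a') (J!b) z0 * v 0 (J!b))"
      using A a' unfolding A_def u_def minor_def
      by (simp add: scalar_prod_def IJ lessThan_atLeast0)
    also have "\<dots> = (\<Sum>j<n. M (I!a') j z0 * v 0 j)"
      by (subst sum_over_list[OF IJ(2) IJ(6)]) (auto simp: vJ IJ(4))
    also have "\<dots> = 0"
    proof (rule kern)
      have "I!a' \<in> set I" using IJ(3) a' by (intro nth_mem) simp
      then show "I!a' \<in> R" using IJ(5) by blast
    qed
    finally show "(A *\<^sub>v u) $ a' = 0\<^sub>v s' $ a'" using a' by simp
  qed (use A in simp)
  have "u \<noteq> 0\<^sub>v s'"
  proof
    assume u0: "u = 0\<^sub>v s'"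
    obtain j0 where j0: "j0 < n" "v 0 j0 \<noteq> 0" using vnz by blast
    then have "j0 \<in> set J" using vJ by blast
    then obtain b0 where b0: "b0 < s'" "J!b0 = j0" using IJ(4) by (auto simp: in_set_conv_nth)
    have "u $ b0 = v 0 j0" unfolding u_def using b0 by simp
    then show False using u0 b0 j0 by simp
  qed
  then have "Determinant.det A = 0"
    using det_0_iff_vec_prod_zero[OF A] u Au by blast
  then show False using det0 unfolding A_def by simp
qed

end

context LB
begin

lemma lower_l: "n - s' \<le> l"
proof -
  obtain z0 I J where z0: "z0 \<in> U" and IJ: "distinct I" "distinct J" "length I = s'" "length J = s'" "set I \<subseteq> R"
    "set J \<subseteq> {..<n}" and det0: "Determinant.det (minor (\<lambda>\<rho> j. M \<rho> j z0) I J) \<noteq> 0"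
    using witness by blast
  have z0b: "z0 \<in> ball 0 1" using z0 U_sub by blast
  define C where "C = {..<n} - set J"
  have cardC: "card C = n - s'"
  proof -
    have "card C = n - card (set J)" unfolding C_def using IJ(6) by (subst card_Diff_subset) auto
    also have "card (set J) = s'" using IJ(2,4) by (simp add: distinct_card)
    finally show ?thesis .
  qed
  define w where "w c z j = cw (\<lambda>\<rho> j. M \<rho> j z) I J c j" for c z j
  have BHw: "BH (\<lambda>z. w c z j)" for c j
    unfolding w_def by (rule BH_cw) (rule BH_M)
  have wker: "(\<Sum>j<n. M \<rho> j z * w c z j) = 0" if "z \<in> U" "\<rho> \<in> R" "c \<in> C" for z \<rho> c
    unfolding w_def
  proof (rule cw_kernel[where R = R])
    fix I' J' assume "distinct I'" "distinct J'" "length I' = Suc (length I)" "length J' = length I'"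
      "set I' \<subseteq> R" "set J' \<subseteq> {..<n}"
    then show "Determinant.det (minor (\<lambda>\<rho> j. M \<rho> j z) I' J') = 0"
      using van_U[OF that(1)] IJ(3) by simp
  qed (use IJ that in \<open>auto simp: C_def\<close>)
  define G where "G i c k z = (\<Sum>j<n. Lm i k j z * w c z j)" for i c k z
  have BHG: "i < r \<Longrightarrow> BH (G i c k)" for i c k
    unfolding G_def[abs_def] by (intro BH_sum BH_mult BH_Lm BHw)
  define PO where "PO i z = (\<Prod>i'\<in>{..<r} - {i}. D i' z)" for i z
  have BHPO: "BH (PO i)" for i
    unfolding PO_def[abs_def] by (intro BH_prod BH_D) auto
  have PD_split: "PD z = D i z * PO i z" if "i < r" for i z
    unfolding PD_def PO_def using that by (subst prod.remove[of _ i]) auto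
  define Fc where "Fc c a z = (if a < n \<and> z \<in> ball 0 1 then PD z * w c z a else 0)" for c a z
  define Hc where "Hc i c k z = (if k < m i \<and> z \<in> ball 0 1 then PO i z * G i c k z else 0)" for i c k z
  have Hc_H2: "Hc i c \<in> H2vec (m i)" if "i < r" for i c
  proof -
    have "Hc i c k \<in> H2" if "k < m i" for k
    proof -
      have "(\<lambda>z. if z \<in> ball 0 1 then PO i z * G i c k z else 0) \<in> H2"
        by (rule BH_H2) (intro BH_mult BHPO BHG \<open>i < r\<close>)
      then show ?thesis unfolding Hc_def[abs_def] using that by simp
    qed
    moreover have "Hc i c k = (\<lambda>_. 0)" if "\<not> k < m i" for k
      unfolding Hc_def[abs_def] using that by simp
    ultimately show ?thesis unfolding H2vec_def by blast
  qed
  have Fc_eq: "Fc c = (\<lambda>a z. \<Sum>k<m i. Ts i a k z * Hc i c k z)" if i: "i < r" and c: "c \<in> C" for i c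
  proof (intro ext)
    fix a z
    show "Fc c a z = (\<Sum>k<m i. Ts i a k z * Hc i c k z)"
    proof (cases "a < n \<and> z \<in> ball 0 1")
      case False
      then have "Ts i a k z = 0" for k
        using inner_out[OF inner[OF i]] inner_row[OF inner[OF i]] by blast
      then show ?thesis unfolding Fc_def using False by auto
    next
      case True
      then have a: "a < n" and zb: "z \<in> ball 0 1" by auto
      have rhs: "(\<Sum>k<m i. Ts i a k z * Hc i c k z) = PO i z * (\<Sum>k<m i. Ts i a k z * G i c k z)"
        unfolding Hc_def using zb by (simp add: sum_distrib_left mult_ac)
      have "PD z * w c z a = PO i z * (\<Sum>k<m i. Ts i a k z * G i c k z)"
      proof (rule analytic_continuation_open[where f = "\<lambda>z. PD z * w c z a"
            and g = "\<lambda>z. PO i z * (\<Sum>k<m i. Ts i a k z * G i c k z)" and s = U and s' = "ball 0 1"])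
        show "open U" by (rule U_open)
        show "U \<noteq> {}" by (rule U_ne)
        show "U \<subseteq> ball 0 1" by (rule U_sub)
        show "(\<lambda>z. PD z * w c z a) holomorphic_on ball 0 1"
          by (rule BH_hol) (intro BH_mult BH_PD BHw)
        show "(\<lambda>z. PO i z * (\<Sum>k<m i. Ts i a k z * G i c k z)) holomorphic_on ball 0 1"
          by (rule BH_hol) (intro BH_mult BH_sum BHPO BH_Ts BHG i)
      next
        fix z' assume z': "z' \<in> U"
        have "(\<Sum>k<m i. Ts i a k z' * G i c k z') = D i z' * w c z' a"
          unfolding G_def
        proof (rule F2[OF i a])
          show "(\<Sum>j<n. M (i, a) j z' * w c z' j) = 0"
            by (rule wker[OF z' _ c]) (use i a in \<open>simp add: R_def\<close>)
        qed
        then show "PD z' * w c z' a = PO i z' * (\<Sum>k<m i. Ts i a k z' * G i c k z')"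
          using PD_split[OF i] by (simp add: mult_ac)
      qed (use zb in auto)
      then show ?thesis unfolding Fc_def rhs using True by simp
    qed
  qed
  have Fc_in: "Fc c \<in> mat_range l T" if c: "c \<in> C" for c
  proof -
    have "Fc c \<in> mat_range (m i) (Ts i)" if i: "i < r" for i
      unfolding Fc_eq[OF i c] mat_range_def using Hc_H2[OF i] by blast
    then have "Fc c \<in> (\<Inter>i<r. mat_range (m i) (Ts i))" by blast
    then show ?thesis using eqR by simp
  qed
  have "\<forall>c. \<exists>H. c \<in> C \<longrightarrow> H \<in> H2vec l \<and> Fc c = (\<lambda>a z. \<Sum>k<l. T a k z * H k z)"
  proof
    fix c
    show "\<exists>H. c \<in> C \<longrightarrow> H \<in> H2vec l \<and> Fc c = (\<lambda>a z. \<Sum>k<l. T a k z * H k z)"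
    proof (cases "c \<in> C")
      case True
      then show ?thesis using Fc_in[OF True] unfolding mat_range_def by blast
    qed simp
  qed
  from choice[OF this] obtain H where H: "\<And>c. c \<in> C \<Longrightarrow> Fc c = (\<lambda>a z. \<Sum>k<l. T a k z * H c k z)"
    by blast
  show ?thesis
  proof (rule ccontr)
    assume "\<not> n - s' \<le> l"
    then have "card {..<l} < card C" using cardC by simp
    then obtain y where y: "\<exists>c\<in>C. y c \<noteq> 0" "\<forall>k\<in>{..<l}. (\<Sum>c\<in>C. H c k z0 * y c) = 0"
      using L1[of "{..<l}" C "\<lambda>k c. H c k z0"] unfolding C_def by auto
    obtain c' where c': "c' \<in> C" "y c' \<noteq> 0" using y(1) by blast
    have c'n: "c' < n" "c' \<notin> set J" using c' unfolding C_def by auto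
    have "(\<Sum>c\<in>C. y c * Fc c c' z0) = (\<Sum>c\<in>C. y c * (\<Sum>k<l. T c' k z0 * H c k z0))"
      by (intro sum.cong refl) (simp add: H)
    also have "\<dots> = (\<Sum>k<l. T c' k z0 * (\<Sum>c\<in>C. H c k z0 * y c))"
      by (simp add: sum_distrib_left mult_ac sum.swap[of _ C])
    also have "\<dots> = 0" using y(2) by simp
    finally have zero: "(\<Sum>c\<in>C. y c * Fc c c' z0) = 0" .
    have "(\<Sum>c\<in>C. y c * Fc c c' z0) = (\<Sum>c\<in>C. if c = c' then y c' * PD z0 * Determinant.det (minor (\<lambda>\<rho> j. M \<rho> j z0) I J) else 0)"
    proof (intro sum.cong refl)
      fix c assume c: "c \<in> C"
      show "y c * Fc c c' z0 = (if c = c' then y c' * PD z0 * Determinant.det (minor (\<lambda>\<rho> j. M \<rho> j z0) I J) else 0)"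
      proof (cases "c = c'")
        case True
        have "w c' z0 c' = Determinant.det (minor (\<lambda>\<rho> j. M \<rho> j z0) I J)"
          unfolding w_def using c'n IJ by (intro cw_c) auto
        then show ?thesis using True c'n z0b unfolding Fc_def by simp
      next
        case False
        have "c \<notin> set J" using c unfolding C_def by auto
        have "w c z0 c' = 0"
          unfolding w_def using c'n False IJ by (intro cw_zero) auto
        then show ?thesis using False unfolding Fc_def by simp
      qed
    qed
    also have "\<dots> = y c' * PD z0 * Determinant.det (minor (\<lambda>\<rho> j. M \<rho> j z0) I J)"
      using c' by (subst sum.delta) (auto simp: C_def)
    finally have "y c' * PD z0 * Determinant.det (minor (\<lambda>\<rho> j. M \<rho> j z0) I J) = 0" using zero by simp
    moreover have "PD z0 \<noteq> 0" using z0 unfolding U_def by simp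
    ultimately show False using c'(2) det0 by simp
  qed
qed

lemma lower_bound: "int n - (\<Sum>i<r. int n - int (m i)) \<le> int l"
proof -
  have "(\<Sum>i<r. int n - int (m i)) = int r * int n - (\<Sum>i<r. int (m i))"
    by (simp add: sum_subtractf)
  moreover have "int n - int s' \<le> int l" using lower_l Q_le by linarith
  ultimately show ?thesis using s_bound by linarith
qed

end

theorem mainTheorem6:
  fixes r n l :: nat and m :: "nat \<Rightarrow> nat" and \<Theta>s :: "nat \<Rightarrow> matfun" and \<Theta> :: matfun
  assumes "r \<ge> 1"
    and "\<forall>i<r. inner_mat n (m i) (\<Theta>s i)"
    and "inner_mat n l \<Theta>"
    and "(\<Inter>i<r. mat_range (m i) (\<Theta>s i)) = mat_range l \<Theta>"
  shows "int n - (\<Sum>i<r. int n - int (m i)) \<le> int l \<and> l \<le> Min (m ` {..<r})"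
proof
  have ub: "l \<le> m i" if i: "i < r" for i
  proof (rule UB[of n "m i" "\<Theta>s i" l \<Theta>])
    show "inner_mat n (m i) (\<Theta>s i)" using assms(2) i by blast
    show "inner_mat n l \<Theta>" by (rule assms(3))
    show "mat_range l \<Theta> \<subseteq> mat_range (m i) (\<Theta>s i)" using assms(4) i by blast
  qed
  have "0 \<in> {..<r}" using assms(1) by simp
  then have ne: "m ` {..<r} \<noteq> {}" by blast
  show "l \<le> Min (m ` {..<r})"
    using ub by (subst Min_ge_iff[OF _ ne]) auto
  have "\<forall>i. \<exists>p. i < r \<longrightarrow> (distinct (fst p) \<and> length (fst p) = m i \<and> set (fst p) \<subseteq> {..<n} \<and>
      distinct (snd p) \<and> length (snd p) = m i \<and> set (snd p) \<subseteq> {..<m i} \<and>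
      (\<exists>z\<in>ball 0 1. Determinant.det (minor (\<lambda>a k. \<Theta>s i a k z) (fst p) (snd p)) \<noteq> 0))"
  proof
    fix i
    show "\<exists>p. i < r \<longrightarrow> (distinct (fst p) \<and> length (fst p) = m i \<and> set (fst p) \<subseteq> {..<n} \<and>
      distinct (snd p) \<and> length (snd p) = m i \<and> set (snd p) \<subseteq> {..<m i} \<and>
      (\<exists>z\<in>ball 0 1. Determinant.det (minor (\<lambda>a k. \<Theta>s i a k z) (fst p) (snd p)) \<noteq> 0))"
    proof (cases "i < r")
      case True
      then have "inner_mat n (m i) (\<Theta>s i)" using assms(2) by blast
      from full_minor[OF this] obtain I J where "distinct I \<and> length I = m i \<and> set I \<subseteq> {..<n} \<and> distinct J \<and> length J = m i \<and> set J \<subseteq> {..<m i}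
         \<and> (\<exists>z\<in>ball 0 1. Determinant.det (minor (\<lambda>a k. \<Theta>s i a k z) I J) \<noteq> 0)" by blast
      then show ?thesis by (intro exI[of _ "(I, J)"]) simp
    qed simp
  qed
  from choice[OF this] obtain p where p: "\<And>i. i < r \<Longrightarrow> (distinct (fst (p i)) \<and> length (fst (p i)) = m i \<and> set (fst (p i)) \<subseteq> {..<n} \<and>
      distinct (snd (p i)) \<and> length (snd (p i)) = m i \<and> set (snd (p i)) \<subseteq> {..<m i} \<and>
      (\<exists>z\<in>ball 0 1. Determinant.det (minor (\<lambda>a k. \<Theta>s i a k z) (fst (p i)) (snd (p i))) \<noteq> 0))"
    by blast
  interpret LB r n l m \<Theta>s \<Theta> "\<lambda>i. fst (p i)" "\<lambda>i. snd (p i)"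
  proof
    show "1 \<le> r" by (rule assms(1))
    show "\<And>i. i < r \<Longrightarrow> inner_mat n (m i) (\<Theta>s i)" using assms(2) by blast
    show "inner_mat n l \<Theta>" by (rule assms(3))
    show "(\<Inter>i<r. mat_range (m i) (\<Theta>s i)) = mat_range l \<Theta>" by (rule assms(4))
  qed (use p in blast)+
  show "int n - (\<Sum>i<r. int n - int (m i)) \<le> int l" by (rule lower_bound)
qed

end
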